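(* Let $\mathcal F'=(\mathcal A',U,\varphi)$ be a tree weakening of a sequential formalism $\mathcal F=(\mathcal A,U,\varphi)$. If every algebraically closed scenario for $\mathcal F$ is satisfiable, then every algebraically closed scenario for $\mathcal F'$ is satisfiable.
   Context: A finite non-associative algebra is a tuple $(\mathcal A,\cup,\neg,\emptyset,\mathcal B,\diamond,\overline{\cdot},e)$ where $(\mathcal A,\cup,\neg,\emptyset,\mathcal B)$ is a finite Boolean algebra and for all $x,y,z$: $\overline{\overline x}=x$, $\overline{x\cup y}=\overline x\cup\overline y$, $\overline{x\diamond y}=\overline y\diamond\overline x$, $e\diamond x=x\diamond e=x$, $x\diamond(y\cup z)=(x\diamond y)\cup(x\diamond z)$, $(x\diamond y)\cap\overline z=\emptyset\iff(y\diamond z)\cap\overline x=\emptyset$. $r\subseteq r'$ means $r\cup r'=r'$; atoms are basic relations; $\mathsf B_i$ denotes the atoms of $\mathcal A_i$. A projection operator from $\mathcal A$ to $\mathcal A'$ is a map $\Rsh$ with $\Rsh(r\cup r')=\Rsh r\cup\Rsh r'$ and $\Rsh\overline r=\overline{\Rsh r}$. A finite multi-algebra is a product $\mathcal A_1\times\cdots\times\mathcal A_m$ of finite non-associative algebras with projection operators $\Rsh_i^j:\mathcal A_i\to\mathcal A_j$ for distinct $i,j$; operations and $\subseteq$ componentwise; universal $\mathcal B=(\mathcal B_1,\dots,\mathcal B_m)$; $R$ basic if all $R_i$ atoms; $B\in R$ means $B$ basic, $B\subseteq R$; $R$ closed under projection if $R_j\subseteq\Rsh_i^jR_i$ for all distinct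 $i,j$; projection closure $\Rsh R$: repeatedly replace $R_j$ by $R_j\cap\Rsh_i^jR_i$ to a fixed point. A sequential formalism is $(\mathcal A,U,\varphi)$ with $\mathcal A$ a finite multi-algebra, $U\ne\emptyset$, $\varphi:\mathcal A\to 2^{U\times U}$ satisfying $\varphi(\Rsh R)=\varphi(R)$, $\varphi(\overline R)=\varphi(R)^{-1}$, $\varphi((\emptyset,\dots,\emptyset))=\emptyset$, $\varphi(R\diamond R')\supseteq(\varphi(R)\circ\varphi(R'))\cap\varphi(\mathcal B)$, $\varphi(R\cap R')=\varphi(R)\cap\varphi(R')$, $\varphi(R)=\bigcup_{B\in R}\varphi(B)$. A network is a finite set $E$ of variables with $N^{xy}$ for distinct $x,y$, $N^{yx}=\overline{N^{xy}}$; a scenario if all $N^{xy}$ basic; satisfiable if some $(u_x)\subseteq U$ has $(u_x,u_y)\in\varphi(N^{xy})$ for all distinct $x,y$; algebraically closed (for a multi-algebra) if $N^{xz}\subseteq N^{xy}\diamond N^{yz}$ for all distinct $x,y,z$ and every $N^{xy}$ is closed under projection (for that multi-algebra's projections). Inverse projection $\check\Rsh_i^j:\mathcal A_j\to\mathcal A_i$: for $b\in\mathsf B_i$, $b'\in\mathsf B_j$, $b\subseteq\check\Rsh_i^jb'\iff b'\subseteq\Rsh_i^jb$. An anti-tree structure on $V$ is a directed graph with a root $r$ such that every $v\ne r$ has exactly one directed path to $r$. A plenary anti-tree structure of $\mathcal A$ is an anti-tree structure $\mathtt A$ on $\{1,\dots,m\}$ such that for all distinct $i,j$, with $i=k_0\to\cdots\to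 k_s\leftarrow\cdots\leftarrow k_{s+t+1}=j$ the shortest oriented chain between them, every $b\in\mathsf B_i$ satisfies $\Rsh_i^jb\supseteq\check\Rsh_j^{k_{s+t}}\cdots\check\Rsh_{k_{s+1}}^{k_s}\Rsh_{k_{s-1}}^{k_s}\cdots\Rsh_i^{k_1}b$; $\mathcal A$ is a tree multi-algebra if it has one. $\mathcal A'$ is a weakening of $\mathcal A$ if it has the same algebras and operations and $\Rsh_i^jb\subseteq\Rsh_i'^jb$ for all distinct $i,j$ and atoms $b$ of $\mathcal A_i$; a tree weakening of a tree multi-algebra $\mathcal A$ if moreover, for some plenary anti-tree structure $\mathtt A$ of $\mathcal A$, $\Rsh_i^jb=\Rsh_i'^jb$ whenever $i\to j$ is an edge of $\mathtt A$. $(\mathcal A',U,\varphi)$ is then a (tree) weakening of $(\mathcal A,U,\varphi)$. *)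

theory Defs
  imports Main
begin

(* Convention: every finite Boolean algebra is represented as the powerset of its
   (finite) set of atoms B; elements are subsets of B, union is \<union>, complement is
   relative to B, \<emptyset> is {} and the top element is B.  Atoms are the singletons {b}.
   The m component algebras of a multi-algebra are indexed by 0..<m. *)

definition nalg :: "'b set \<Rightarrow> ('b set \<Rightarrow> 'b set) \<Rightarrow> ('b set \<Rightarrow> 'b set \<Rightarrow> 'b set) \<Rightarrow> 'b set \<Rightarrow> bool" where
  "nalg B cv cp e \<longleftrightarrow>
     finite B \<and> e \<subseteq> B \<and>
     (\<forall>x. x \<subseteq> B \<longrightarrow> cv x \<subseteq> B) \<and>
     (\<forall>x y. x \<subseteq> B \<longrightarrow> y \<subseteq> B \<longrightarrow> cp x y \<subseteq> B) \<and>
     (\<forall>x. x \<subseteq> B \<longrightarrow> cv (cv x) = x) \<and>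
     (\<forall>x y. x \<subseteq> B \<longrightarrow> y \<subseteq> B \<longrightarrow> cv (x \<union> y) = cv x \<union> cv y) \<and>
     (\<forall>x y. x \<subseteq> B \<longrightarrow> y \<subseteq> B \<longrightarrow> cv (cp x y) = cp (cv y) (cv x)) \<and>
     (\<forall>x. x \<subseteq> B \<longrightarrow> cp e x = x \<and> cp x e = x) \<and>
     (\<forall>x y z. x \<subseteq> B \<longrightarrow> y \<subseteq> B \<longrightarrow> z \<subseteq> B \<longrightarrow> cp x (y \<union> z) = cp x y \<union> cp x z) \<and>
     (\<forall>x y z. x \<subseteq> B \<longrightarrow> y \<subseteq> B \<longrightarrow> z \<subseteq> B \<longrightarrow>
        (cp x y \<inter> cv z = {} \<longleftrightarrow> cp y z \<inter> cv x = {}))"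

definition projop :: "'b set \<Rightarrow> 'b set \<Rightarrow> ('b set \<Rightarrow> 'b set) \<Rightarrow> ('b set \<Rightarrow> 'b set) \<Rightarrow> ('b set \<Rightarrow> 'b set) \<Rightarrow> bool" where
  "projop Bi Bj cvi cvj p \<longleftrightarrow>
     (\<forall>r. r \<subseteq> Bi \<longrightarrow> p r \<subseteq> Bj) \<and>
     (\<forall>r r'. r \<subseteq> Bi \<longrightarrow> r' \<subseteq> Bi \<longrightarrow> p (r \<union> r') = p r \<union> p r') \<and>
     (\<forall>r. r \<subseteq> Bi \<longrightarrow> p (cvi r) = cvj (p r))"

definition multialg :: "nat \<Rightarrow> (nat \<Rightarrow> 'b set) \<Rightarrow> (nat \<Rightarrow> 'b set \<Rightarrow> 'b set) \<Rightarrow>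
    (nat \<Rightarrow> 'b set \<Rightarrow> 'b set \<Rightarrow> 'b set) \<Rightarrow> (nat \<Rightarrow> 'b set) \<Rightarrow> (nat \<Rightarrow> nat \<Rightarrow> 'b set \<Rightarrow> 'b set) \<Rightarrow> bool" where
  "multialg m At cv cp e pr \<longleftrightarrow>
     (\<forall>i<m. nalg (At i) (cv i) (cp i) (e i)) \<and>
     (\<forall>i<m. \<forall>j<m. i \<noteq> j \<longrightarrow> projop (At i) (At j) (cv i) (cv j) (pr i j))"

(* elements of the multi-algebra: tuples (R_0,...,R_{m-1}), extended by {} beyond m *)
definition mcarrier :: "nat \<Rightarrow> (nat \<Rightarrow> 'b set) \<Rightarrow> (nat \<Rightarrow> 'b set) \<Rightarrow> bool" where
  "mcarrier m At R \<longleftrightarrow> (\<forall>i<m. R i \<subseteq> At i) \<and> (\<forall>i. m \<le> i \<longrightarrow> R i = {})"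

definition mcv :: "nat \<Rightarrow> (nat \<Rightarrow> 'b set \<Rightarrow> 'b set) \<Rightarrow> (nat \<Rightarrow> 'b set) \<Rightarrow> (nat \<Rightarrow> 'b set)" where
  "mcv m cv R = (\<lambda>i. if i < m then cv i (R i) else {})"

definition mcp :: "nat \<Rightarrow> (nat \<Rightarrow> 'b set \<Rightarrow> 'b set \<Rightarrow> 'b set) \<Rightarrow> (nat \<Rightarrow> 'b set) \<Rightarrow> (nat \<Rightarrow> 'b set) \<Rightarrow> (nat \<Rightarrow> 'b set)" where
  "mcp m cp R S = (\<lambda>i. if i < m then cp i (R i) (S i) else {})"

definition minter :: "(nat \<Rightarrow> 'b set) \<Rightarrow> (nat \<Rightarrow> 'b set) \<Rightarrow> (nat \<Rightarrow> 'b set)" where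
  "minter R S = (\<lambda>i. R i \<inter> S i)"

definition msub :: "(nat \<Rightarrow> 'b set) \<Rightarrow> (nat \<Rightarrow> 'b set) \<Rightarrow> bool" where
  "msub R S \<longleftrightarrow> (\<forall>i. R i \<subseteq> S i)"

definition mempty :: "nat \<Rightarrow> 'b set" where
  "mempty = (\<lambda>i. {})"

definition muniv :: "nat \<Rightarrow> (nat \<Rightarrow> 'b set) \<Rightarrow> (nat \<Rightarrow> 'b set)" where
  "muniv m At = (\<lambda>i. if i < m then At i else {})"

definition mbasic :: "nat \<Rightarrow> (nat \<Rightarrow> 'b set) \<Rightarrow> (nat \<Rightarrow> 'b set) \<Rightarrow> bool" where
  "mbasic m At R \<longleftrightarrow> mcarrier m At R \<and> (\<forall>i<m. \<exists>b\<in>At i. R i = {b})"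

definition closed_proj :: "nat \<Rightarrow> (nat \<Rightarrow> nat \<Rightarrow> 'b set \<Rightarrow> 'b set) \<Rightarrow> (nat \<Rightarrow> 'b set) \<Rightarrow> bool" where
  "closed_proj m pr R \<longleftrightarrow> (\<forall>i<m. \<forall>j<m. i \<noteq> j \<longrightarrow> R j \<subseteq> pr i j (R i))"

(* projection closure: the fixed point reached by repeatedly replacing R_j by
   R_j \<inter> pr i j R_i, i.e. the greatest fixed point of this refinement below R *)
definition pclos :: "nat \<Rightarrow> (nat \<Rightarrow> nat \<Rightarrow> 'b set \<Rightarrow> 'b set) \<Rightarrow> (nat \<Rightarrow> 'b set) \<Rightarrow> (nat \<Rightarrow> 'b set)" where
  "pclos m pr R = gfp (\<lambda>S j. R j \<inter> (\<Inter>i\<in>{i. i < m \<and> i \<noteq> j}. pr i j (S i)))"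

definition seqf :: "nat \<Rightarrow> (nat \<Rightarrow> 'b set) \<Rightarrow> (nat \<Rightarrow> 'b set \<Rightarrow> 'b set) \<Rightarrow>
    (nat \<Rightarrow> 'b set \<Rightarrow> 'b set \<Rightarrow> 'b set) \<Rightarrow> (nat \<Rightarrow> 'b set) \<Rightarrow> (nat \<Rightarrow> nat \<Rightarrow> 'b set \<Rightarrow> 'b set) \<Rightarrow>
    'u set \<Rightarrow> ((nat \<Rightarrow> 'b set) \<Rightarrow> ('u \<times> 'u) set) \<Rightarrow> bool" where
  "seqf m At cv cp e pr U \<phi> \<longleftrightarrow>
     multialg m At cv cp e pr \<and> U \<noteq> {} \<and>
     (\<forall>R. mcarrier m At R \<longrightarrow> \<phi> R \<subseteq> U \<times> U) \<and>
     (\<forall>R. mcarrier m At R \<longrightarrow> \<phi> (pclos m pr R) = \<phi> R) \<and>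
     (\<forall>R. mcarrier m At R \<longrightarrow> \<phi> (mcv m cv R) = (\<phi> R)\<inverse>) \<and>
     \<phi> mempty = {} \<and>
     (\<forall>R R'. mcarrier m At R \<longrightarrow> mcarrier m At R' \<longrightarrow>
        (\<phi> R O \<phi> R') \<inter> \<phi> (muniv m At) \<subseteq> \<phi> (mcp m cp R R')) \<and>
     (\<forall>R R'. mcarrier m At R \<longrightarrow> mcarrier m At R' \<longrightarrow>
        \<phi> (minter R R') = \<phi> R \<inter> \<phi> R') \<and>
     (\<forall>R. mcarrier m At R \<longrightarrow> \<phi> R = (\<Union>B\<in>{B. mbasic m At B \<and> msub B R}. \<phi> B))"

definition network :: "nat \<Rightarrow> (nat \<Rightarrow> 'b set) \<Rightarrow> (nat \<Rightarrow> 'b set \<Rightarrow> 'b set) \<Rightarrow>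
    nat set \<Rightarrow> (nat \<Rightarrow> nat \<Rightarrow> (nat \<Rightarrow> 'b set)) \<Rightarrow> bool" where
  "network m At cv E N \<longleftrightarrow> finite E \<and>
     (\<forall>x\<in>E. \<forall>y\<in>E. x \<noteq> y \<longrightarrow> mcarrier m At (N x y) \<and> N y x = mcv m cv (N x y))"

definition scenario :: "nat \<Rightarrow> (nat \<Rightarrow> 'b set) \<Rightarrow> (nat \<Rightarrow> 'b set \<Rightarrow> 'b set) \<Rightarrow>
    nat set \<Rightarrow> (nat \<Rightarrow> nat \<Rightarrow> (nat \<Rightarrow> 'b set)) \<Rightarrow> bool" where
  "scenario m At cv E N \<longleftrightarrow> network m At cv E N \<and>
     (\<forall>x\<in>E. \<forall>y\<in>E. x \<noteq> y \<longrightarrow> mbasic m At (N x y))"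

definition satisfiable :: "'u set \<Rightarrow> ((nat \<Rightarrow> 'b set) \<Rightarrow> ('u \<times> 'u) set) \<Rightarrow>
    nat set \<Rightarrow> (nat \<Rightarrow> nat \<Rightarrow> (nat \<Rightarrow> 'b set)) \<Rightarrow> bool" where
  "satisfiable U \<phi> E N \<longleftrightarrow>
     (\<exists>u. (\<forall>x\<in>E. u x \<in> U) \<and> (\<forall>x\<in>E. \<forall>y\<in>E. x \<noteq> y \<longrightarrow> (u x, u y) \<in> \<phi> (N x y)))"

definition alg_closed :: "nat \<Rightarrow> (nat \<Rightarrow> 'b set \<Rightarrow> 'b set \<Rightarrow> 'b set) \<Rightarrow> (nat \<Rightarrow> nat \<Rightarrow> 'b set \<Rightarrow> 'b set) \<Rightarrow>
    nat set \<Rightarrow> (nat \<Rightarrow> nat \<Rightarrow> (nat \<Rightarrow> 'b set)) \<Rightarrow> bool" where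
  "alg_closed m cp pr E N \<longleftrightarrow>
     (\<forall>x\<in>E. \<forall>y\<in>E. \<forall>z\<in>E. x \<noteq> y \<and> y \<noteq> z \<and> x \<noteq> z \<longrightarrow>
        msub (N x z) (mcp m cp (N x y) (N y z))) \<and>
     (\<forall>x\<in>E. \<forall>y\<in>E. x \<noteq> y \<longrightarrow> closed_proj m pr (N x y))"

(* inverse projection  \<check>pr_i^j : A_j \<rightarrow> A_i, defined on atoms by
   b \<subseteq> \<check>pr_i^j b' \<longleftrightarrow> b' \<subseteq> pr_i^j b, and extended to all elements by unions *)
definition ipr :: "(nat \<Rightarrow> 'b set) \<Rightarrow> (nat \<Rightarrow> nat \<Rightarrow> 'b set \<Rightarrow> 'b set) \<Rightarrow> nat \<Rightarrow> nat \<Rightarrow> 'b set \<Rightarrow> 'b set" where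
  "ipr At pr i j r = {b \<in> At i. \<exists>b'\<in>r. b' \<in> pr i j {b}}"

definition dpath :: "(nat \<times> nat) set \<Rightarrow> nat \<Rightarrow> nat \<Rightarrow> nat list \<Rightarrow> bool" where
  "dpath Ed v r p \<longleftrightarrow> p \<noteq> [] \<and> hd p = v \<and> last p = r \<and> distinct p \<and>
     (\<forall>l. Suc l < length p \<longrightarrow> (p ! l, p ! Suc l) \<in> Ed)"

definition anti_tree :: "nat set \<Rightarrow> (nat \<times> nat) set \<Rightarrow> nat \<Rightarrow> bool" where
  "anti_tree V Ed r \<longleftrightarrow> r \<in> V \<and> Ed \<subseteq> V \<times> V \<and>
     (\<forall>v\<in>V. v \<noteq> r \<longrightarrow> (\<exists>!p. dpath Ed v r p))"

(* oriented chain i = k_0 \<rightarrow> ... \<rightarrow> k_s \<leftarrow> ... \<leftarrow> k_{last} = j, given as the list ks and the peak index s *)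
definition ochain :: "(nat \<times> nat) set \<Rightarrow> nat \<Rightarrow> nat \<Rightarrow> nat list \<Rightarrow> nat \<Rightarrow> bool" where
  "ochain Ed i j ks s \<longleftrightarrow> ks \<noteq> [] \<and> hd ks = i \<and> last ks = j \<and> s < length ks \<and>
     (\<forall>l<s. (ks ! l, ks ! Suc l) \<in> Ed) \<and>
     (\<forall>l. s \<le> l \<and> Suc l < length ks \<longrightarrow> (ks ! Suc l, ks ! l) \<in> Ed)"

definition shortest_ochain :: "(nat \<times> nat) set \<Rightarrow> nat \<Rightarrow> nat \<Rightarrow> nat list \<Rightarrow> nat \<Rightarrow> bool" where
  "shortest_ochain Ed i j ks s \<longleftrightarrow> ochain Ed i j ks s \<and>
     (\<forall>ks' s'. ochain Ed i j ks' s' \<longrightarrow> length ks \<le> length ks')"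

fun upmap :: "(nat \<Rightarrow> nat \<Rightarrow> 'b set \<Rightarrow> 'b set) \<Rightarrow> nat list \<Rightarrow> 'b set \<Rightarrow> 'b set" where
  "upmap pr (k # k' # ks) x = upmap pr (k' # ks) (pr k k' x)"
| "upmap pr ks x = x"

fun downmap :: "(nat \<Rightarrow> 'b set) \<Rightarrow> (nat \<Rightarrow> nat \<Rightarrow> 'b set \<Rightarrow> 'b set) \<Rightarrow> nat list \<Rightarrow> 'b set \<Rightarrow> 'b set" where
  "downmap At pr (k # k' # ks) x = downmap At pr (k' # ks) (ipr At pr k' k x)"
| "downmap At pr ks x = x"

definition plenary :: "nat \<Rightarrow> (nat \<Rightarrow> 'b set) \<Rightarrow> (nat \<Rightarrow> nat \<Rightarrow> 'b set \<Rightarrow> 'b set) \<Rightarrow> (nat \<times> nat) set \<Rightarrow> bool" where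
  "plenary m At pr Ed \<longleftrightarrow> (\<exists>r. anti_tree {..<m} Ed r) \<and>
     (\<forall>i<m. \<forall>j<m. i \<noteq> j \<longrightarrow> (\<forall>ks s. shortest_ochain Ed i j ks s \<longrightarrow>
        (\<forall>b\<in>At i. downmap At pr (drop s ks) (upmap pr (take (Suc s) ks) {b}) \<subseteq> pr i j {b})))"

definition tree_multialg :: "nat \<Rightarrow> (nat \<Rightarrow> 'b set) \<Rightarrow> (nat \<Rightarrow> 'b set \<Rightarrow> 'b set) \<Rightarrow>
    (nat \<Rightarrow> 'b set \<Rightarrow> 'b set \<Rightarrow> 'b set) \<Rightarrow> (nat \<Rightarrow> 'b set) \<Rightarrow> (nat \<Rightarrow> nat \<Rightarrow> 'b set \<Rightarrow> 'b set) \<Rightarrow> bool" where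
  "tree_multialg m At cv cp e pr \<longleftrightarrow> multialg m At cv cp e pr \<and> (\<exists>Ed. plenary m At pr Ed)"

definition weakening :: "nat \<Rightarrow> (nat \<Rightarrow> 'b set) \<Rightarrow> (nat \<Rightarrow> 'b set \<Rightarrow> 'b set) \<Rightarrow>
    (nat \<Rightarrow> 'b set \<Rightarrow> 'b set \<Rightarrow> 'b set) \<Rightarrow> (nat \<Rightarrow> 'b set) \<Rightarrow>
    (nat \<Rightarrow> nat \<Rightarrow> 'b set \<Rightarrow> 'b set) \<Rightarrow> (nat \<Rightarrow> nat \<Rightarrow> 'b set \<Rightarrow> 'b set) \<Rightarrow> bool" where
  "weakening m At cv cp e pr pr' \<longleftrightarrow> multialg m At cv cp e pr \<and> multialg m At cv cp e pr' \<and>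
     (\<forall>i<m. \<forall>j<m. i \<noteq> j \<longrightarrow> (\<forall>b\<in>At i. pr i j {b} \<subseteq> pr' i j {b}))"

definition tree_weakening :: "nat \<Rightarrow> (nat \<Rightarrow> 'b set) \<Rightarrow> (nat \<Rightarrow> 'b set \<Rightarrow> 'b set) \<Rightarrow>
    (nat \<Rightarrow> 'b set \<Rightarrow> 'b set \<Rightarrow> 'b set) \<Rightarrow> (nat \<Rightarrow> 'b set) \<Rightarrow>
    (nat \<Rightarrow> nat \<Rightarrow> 'b set \<Rightarrow> 'b set) \<Rightarrow> (nat \<Rightarrow> nat \<Rightarrow> 'b set \<Rightarrow> 'b set) \<Rightarrow> bool" where
  "tree_weakening m At cv cp e pr pr' \<longleftrightarrow> weakening m At cv cp e pr pr' \<and>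
     tree_multialg m At cv cp e pr \<and>
     (\<exists>Ed. plenary m At pr Ed \<and>
        (\<forall>i j. (i, j) \<in> Ed \<and> i \<noteq> j \<longrightarrow> (\<forall>b\<in>At i. pr i j {b} = pr' i j {b})))"

end

theory Submission
  imports Defs
begin


lemma ochain_noloop:
  assumes oc: "ochain Ed i j ks s" and l: "Suc l < length ks" and eq: "ks ! l = ks ! Suc l"
  shows "\<exists>ks' s'. ochain Ed i j ks' s' \<and> length ks' < length ks"
proof -
  define n where "n = length ks"
  define f where "f t = (if t \<le> l then t else Suc t)" for t
  define ks' where "ks' = map (\<lambda>t. ks ! f t) [0..<n - 1]"
  define s' where "s' = (if l < s then s - 1 else s)"
  have len: "length ks' = n - 1" by (simp add: ks'_def)
  have nth': "t < n - 1 \<Longrightarrow> ks' ! t = ks ! f t" for t by (simp add: ks'_def)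
  have n2: "n \<ge> 2" using l n_def by simp
  have A: "t \<le> l \<Longrightarrow> t < n - 1 \<Longrightarrow> ks' ! t = ks ! t" for t by (simp add: nth' f_def)
  have B: "l \<le> t \<Longrightarrow> t < n - 1 \<Longrightarrow> ks' ! t = ks ! Suc t" for t
    using eq by (cases "t = l") (auto simp: nth' f_def)
  have oc': "ks \<noteq> [] \<and> hd ks = i \<and> last ks = j \<and> s < n \<and>
     (\<forall>l<s. (ks ! l, ks ! Suc l) \<in> Ed) \<and>
     (\<forall>l. s \<le> l \<and> Suc l < n \<longrightarrow> (ks ! Suc l, ks ! l) \<in> Ed)"
    using oc by (simp add: ochain_def n_def)
  have D: "\<And>u. s \<le> u \<Longrightarrow> Suc u < n \<Longrightarrow> (ks ! Suc u, ks ! u) \<in> Ed" using oc' by blast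
  have "ks' \<noteq> []" using len n2 by auto
  moreover have "hd ks' = i"
  proof -
    have "hd ks' = ks' ! 0" using \<open>ks' \<noteq> []\<close> by (simp add: hd_conv_nth)
    also have "\<dots> = ks ! 0" using A[of 0] n2 by simp
    finally show ?thesis using oc' by (metis hd_conv_nth)
  qed
  moreover have "last ks' = j"
  proof -
    have "last ks' = ks' ! (n - 2)" using \<open>ks' \<noteq> []\<close> len by (simp add: last_conv_nth numeral_2_eq_2)
    also have "\<dots> = ks ! (n - 1)"
    proof (cases "n - 2 \<le> l")
      case True
      then have "l = n - 2" using l n_def by simp
      then show ?thesis using A[of "n-2"] n2 eq by (simp add: Suc_diff_Suc numeral_2_eq_2)
    next
      case False
      then show ?thesis using B[of "n-2"] n2 by (simp add: Suc_diff_Suc numeral_2_eq_2)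
    qed
    finally show ?thesis using oc' by (metis last_conv_nth n_def)
  qed
  moreover have "s' < length ks'" using oc' l n_def len by (auto simp: s'_def)
  moreover have "\<forall>t<s'. (ks' ! t, ks' ! Suc t) \<in> Ed"
  proof (intro allI impI)
    fix t assume t: "t < s'"
    have tn: "Suc t < n - 1" using t oc' l n_def by (auto simp: s'_def split: if_splits)
    show "(ks' ! t, ks' ! Suc t) \<in> Ed"
    proof (cases "Suc t \<le> l")
      case True
      then show ?thesis using A[of t] A[of "Suc t"] tn t oc' by (auto simp: s'_def split: if_splits)
    next
      case False
      then have "l \<le> t" by simp
      then show ?thesis using B[of t] B[of "Suc t"] tn t oc' by (auto simp: s'_def split: if_splits)
    qed
  qed
  moreover have "\<forall>t. s' \<le> t \<and> Suc t < length ks' \<longrightarrow> (ks' ! Suc t, ks' ! t) \<in> Ed"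
  proof (intro allI impI)
    fix t assume t: "s' \<le> t \<and> Suc t < length ks'"
    have tn: "Suc t < n - 1" using t len by simp
    show "(ks' ! Suc t, ks' ! t) \<in> Ed"
    proof (cases "Suc t \<le> l")
      case True
      then show ?thesis using A[of t] A[of "Suc t"] tn t oc' by (auto simp: s'_def split: if_splits)
    next
      case False
      then have "l \<le> t" by simp
      then show ?thesis using B[of t] B[of "Suc t"] tn t oc' proof -
        have "s \<le> Suc t" "Suc (Suc t) < n" using t tn by (auto simp: s'_def split: if_splits)
        then have "(ks ! Suc (Suc t), ks ! Suc t) \<in> Ed" by (rule D)
        then show ?thesis using B[of t] B[of "Suc t"] tn \<open>l \<le> t\<close> by simp
      qed
    qed
  qed
  ultimately have "ochain Ed i j ks' s'" by (simp add: ochain_def)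
  moreover have "length ks' < length ks" using len n2 n_def by simp
  ultimately show ?thesis by blast
qed


lemma path_to_root:
  assumes "anti_tree V Ed r" "v \<in> V"
  shows "\<exists>p. p \<noteq> [] \<and> hd p = v \<and> last p = r \<and> (\<forall>l. Suc l < length p \<longrightarrow> (p!l, p!Suc l) \<in> Ed)"
proof (cases "v = r")
  case True then show ?thesis by (intro exI[of _ "[r]"]) simp
next
  case False
  then obtain p where "dpath Ed v r p" using assms unfolding anti_tree_def by blast
  then show ?thesis unfolding dpath_def by blast
qed

lemma ochain_exists:
  assumes at: "anti_tree V Ed r" and iV: "i \<in> V" and jV: "j \<in> V"
  shows "\<exists>ks s. ochain Ed i j ks s"
proof -
  obtain qi where qi: "qi \<noteq> []" "hd qi = i" "last qi = r" "\<forall>l. Suc l < length qi \<longrightarrow> (qi!l, qi!Suc l) \<in> Ed"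
    using path_to_root[OF at iV] by blast
  obtain qj where qj: "qj \<noteq> []" "hd qj = j" "last qj = r" "\<forall>l. Suc l < length qj \<longrightarrow> (qj!l, qj!Suc l) \<in> Ed"
    using path_to_root[OF at jV] by blast
  define rj where "rj = rev qj"
  have rj: "rj \<noteq> []" "hd rj = r" "last rj = j" using qj by (auto simp: rj_def hd_rev last_rev)
  have rje: "(rj ! Suc l, rj ! l) \<in> Ed" if "Suc l < length rj" for l
  proof -
    have L: "length rj = length qj" by (simp add: rj_def)
    have "rj ! Suc l = qj ! (length qj - Suc (Suc l))" "rj ! l = qj ! Suc (length qj - Suc (Suc l))"
      using that L by (auto simp: rj_def rev_nth Suc_diff_Suc)
    moreover have "Suc (length qj - Suc (Suc l)) < length qj" using that L by simp
    ultimately show ?thesis using qj(4) by simp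
  qed
  define ka where "ka = length qi - 1"
  define ks where "ks = butlast qi @ rj"
  have la: "length (butlast qi) = ka" unfolding ka_def by simp
  have lks: "length ks = ka + length rj" by (simp add: ks_def ka_def)
  have n1: "t < ka \<Longrightarrow> ks ! t = qi ! t" for t by (simp add: ks_def nth_append ka_def nth_butlast)
  have n2: "ka \<le> t \<Longrightarrow> ks ! t = rj ! (t - ka)" for t by (simp add: ks_def nth_append ka_def)
  have pia: "qi ! ka = r" using qi by (simp add: ka_def last_conv_nth)
  have rj0: "rj ! 0 = r" using rj by (simp add: hd_conv_nth)
  have n1': "t \<le> ka \<Longrightarrow> ks ! t = qi ! t" for t
    using n1 n2 pia rj0 by (cases "t = ka") auto
  have "ochain Ed i j ks ka"
    unfolding ochain_def
  proof (intro conjI allI impI)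
    show "ks \<noteq> []" using rj by (simp add: ks_def)
    show "hd ks = i" using n1'[of 0] qi \<open>ks \<noteq> []\<close> by (simp add: hd_conv_nth)
    show "last ks = j" using rj by (simp add: ks_def)
    show "ka < length ks" using lks rj by simp
    fix l assume "l < ka"
    then show "(ks ! l, ks ! Suc l) \<in> Ed" using n1'[of l] n1'[of "Suc l"] qi(4) ka_def by simp
  next
    fix l assume l: "ka \<le> l \<and> Suc l < length ks"
    then have "Suc (l - ka) < length rj" using lks by linarith
    then have "(rj ! Suc (l - ka), rj ! (l - ka)) \<in> Ed" by (rule rje)
    moreover have "Suc l - ka = Suc (l - ka)" using l by (simp add: Suc_diff_le)
    ultimately show "(ks ! Suc l, ks ! l) \<in> Ed" using n2[of l] n2[of "Suc l"] l by simp
  qed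
  then show ?thesis by blast
qed


lemma upmap_mem:
  assumes H: "\<And>k k' y. Q k k' \<Longrightarrow> y \<subseteq> At k \<Longrightarrow> \<beta> k \<in> y \<Longrightarrow> \<beta> k' \<in> pr k k' y \<and> pr k k' y \<subseteq> At k'"
  shows "ks \<noteq> [] \<Longrightarrow> (\<forall>l. Suc l < length ks \<longrightarrow> Q (ks!l) (ks!Suc l)) \<Longrightarrow> x \<subseteq> At (hd ks) \<Longrightarrow>
    \<beta> (hd ks) \<in> x \<Longrightarrow> \<beta> (last ks) \<in> upmap pr ks x"
proof (induction ks arbitrary: x rule: induct_list012)
  case (3 k k' ks x)
  have q: "Q k k'" using "3.prems"(2)[rule_format, of 0] by simp
  have q2: "\<forall>l. Suc l < length (k' # ks) \<longrightarrow> Q ((k' # ks)!l) ((k' # ks)!Suc l)"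
  proof (intro allI impI)
    fix l assume "Suc l < length (k' # ks)"
    then show "Q ((k' # ks)!l) ((k' # ks)!Suc l)" using "3.prems"(2)[rule_format, of "Suc l"] by simp
  qed
  have "\<beta> k' \<in> pr k k' x \<and> pr k k' x \<subseteq> At k'" using H[OF q] "3.prems" by simp
  then show ?case using "3.IH"(2)[OF _ q2] by simp
qed auto

lemma downmap_mem:
  assumes H: "\<And>k k'. D k k' \<Longrightarrow> \<beta> k' \<in> At k' \<and> \<beta> k \<in> pr k' k {\<beta> k'}"
  shows "ks \<noteq> [] \<Longrightarrow> (\<forall>l. Suc l < length ks \<longrightarrow> D (ks!l) (ks!Suc l)) \<Longrightarrow>
    \<beta> (hd ks) \<in> x \<Longrightarrow> \<beta> (last ks) \<in> downmap At pr ks x"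
proof (induction ks arbitrary: x rule: induct_list012)
  case (3 k k' ks x)
  have q: "D k k'" using "3.prems"(2)[rule_format, of 0] by simp
  have q2: "\<forall>l. Suc l < length (k' # ks) \<longrightarrow> D ((k' # ks)!l) ((k' # ks)!Suc l)"
  proof (intro allI impI)
    fix l assume "Suc l < length (k' # ks)"
    then show "D ((k' # ks)!l) ((k' # ks)!Suc l)" using "3.prems"(2)[rule_format, of "Suc l"] by simp
  qed
  have "\<beta> k' \<in> ipr At pr k' k x" using H[OF q] "3.prems" unfolding ipr_def by auto
  then show ?case using "3.IH"(2)[OF _ q2] by simp
qed auto


lemma closed_transfer:
  assumes ma: "multialg m At cv cp e pr"
    and pl: "plenary m At pr Ed"
    and eqE: "\<forall>i j. (i, j) \<in> Ed \<and> i \<noteq> j \<longrightarrow> (\<forall>b\<in>At i. pr i j {b} = pr' i j {b})"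
    and bas: "mbasic m At R"
    and cl: "closed_proj m pr' R"
  shows "closed_proj m pr R"
  unfolding closed_proj_def
proof (intro allI impI)
  fix i j assume i: "i < m" and j: "j < m" and ij: "i \<noteq> j"
  define \<beta> where "\<beta> k = the_elem (R k)" for k
  have Rk: "k < m \<Longrightarrow> R k = {\<beta> k} \<and> \<beta> k \<in> At k" for k
    using bas unfolding mbasic_def \<beta>_def by fastforce
  obtain r where at: "anti_tree {..<m} Ed r" using pl unfolding plenary_def by blast
  have EdV: "(a, b) \<in> Ed \<Longrightarrow> a < m \<and> b < m" for a b using at unfolding anti_tree_def by auto
  have po: "\<And>k k'. k < m \<Longrightarrow> k' < m \<Longrightarrow> k \<noteq> k' \<Longrightarrow> projop (At k) (At k') (cv k) (cv k') (pr k k')"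
    using ma unfolding multialg_def by blast
  have edge: "\<beta> k' \<in> pr k k' {\<beta> k}" if "(k, k') \<in> Ed" "k \<noteq> k'" for k k'
  proof -
    have m: "k < m" "k' < m" using EdV that by auto
    have "R k' \<subseteq> pr' k k' (R k)" using cl m that unfolding closed_proj_def by blast
    then show ?thesis using Rk[OF m(1)] Rk[OF m(2)] eqE that by auto
  qed
  have Qh: "\<beta> k' \<in> pr k k' y \<and> pr k k' y \<subseteq> At k'"
    if "(\<lambda>k k'. (k, k') \<in> Ed \<and> k \<noteq> k') k k'" "y \<subseteq> At k" "\<beta> k \<in> y" for k k' y
  proof -
    have m: "k < m" "k' < m" using EdV that by auto
    have P: "projop (At k) (At k') (cv k) (cv k') (pr k k')" using po m that by auto
    have "{\<beta> k} \<subseteq> At k" using Rk m by auto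
    then have "pr k k' ({\<beta> k} \<union> y) = pr k k' {\<beta> k} \<union> pr k k' y" using P that unfolding projop_def by blast
    moreover have "{\<beta> k} \<union> y = y" using that by auto
    ultimately show ?thesis using edge[of k k'] that P unfolding projop_def by auto
  qed
  have Dh: "\<beta> k' \<in> At k' \<and> \<beta> k \<in> pr k' k {\<beta> k'}"
    if "(\<lambda>k k'. (k', k) \<in> Ed \<and> k \<noteq> k') k k'" for k k'
    using that edge[of k' k] EdV[of k' k] Rk by auto
  have ex: "\<exists>ks s. ochain Ed i j ks s" using ochain_exists[OF at] i j by auto
  define n0 where "n0 = (LEAST n. \<exists>ks s. ochain Ed i j ks s \<and> length ks = n)"
  have "\<exists>ks s. ochain Ed i j ks s \<and> length ks = n0"
    unfolding n0_def by (rule LeastI_ex) (use ex in blast)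
  then obtain ks s where oc: "ochain Ed i j ks s" and lk: "length ks = n0" by blast
  have sh: "shortest_ochain Ed i j ks s"
    unfolding shortest_ochain_def
  proof (intro conjI allI impI oc)
    fix ks' s' assume "ochain Ed i j ks' s'"
    then show "length ks \<le> length ks'" unfolding lk n0_def by (blast intro: Least_le)
  qed
  have nl: "ks ! l \<noteq> ks ! Suc l" if "Suc l < length ks" for l
  proof
    assume "ks ! l = ks ! Suc l"
    from ochain_noloop[OF oc that this] obtain ks' s' where "ochain Ed i j ks' s'" "length ks' < length ks"
      by blast
    then show False using sh unfolding shortest_ochain_def by fastforce
  qed
  have oc': "ks \<noteq> [] \<and> hd ks = i \<and> last ks = j \<and> s < length ks \<and>
     (\<forall>l<s. (ks ! l, ks ! Suc l) \<in> Ed) \<and>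
     (\<forall>l. s \<le> l \<and> Suc l < length ks \<longrightarrow> (ks ! Suc l, ks ! l) \<in> Ed)"
    using oc by (simp add: ochain_def)
  define ku where "ku = take (Suc s) ks"
  define kd where "kd = drop s ks"
  have ku: "ku \<noteq> []" "hd ku = i" "last ku = ks ! s" "length ku = Suc s"
    using oc' by (auto simp: ku_def hd_conv_nth last_conv_nth)
  have kd: "kd \<noteq> []" "hd kd = ks ! s" "last kd = j"
    using oc' by (auto simp: kd_def hd_drop_conv_nth)
  have "\<beta> (last ku) \<in> upmap pr ku {\<beta> i}"
  proof (rule upmap_mem[where Q = "\<lambda>k k'. (k, k') \<in> Ed \<and> k \<noteq> k'"])
    show "\<And>k k' y. (k, k') \<in> Ed \<and> k \<noteq> k' \<Longrightarrow> y \<subseteq> At k \<Longrightarrow> \<beta> k \<in> y \<Longrightarrow> \<beta> k' \<in> pr k k' y \<and> pr k k' y \<subseteq> At k'"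
      using Qh by blast
    show "ku \<noteq> []" by fact
    show "\<forall>l. Suc l < length ku \<longrightarrow> (ku ! l, ku ! Suc l) \<in> Ed \<and> ku ! l \<noteq> ku ! Suc l"
      using oc' nl ku(4) by (auto simp: ku_def)
    show "{\<beta> i} \<subseteq> At (hd ku)" using ku Rk i by auto
    show "\<beta> (hd ku) \<in> {\<beta> i}" using ku by simp
  qed
  then have "\<beta> (last kd) \<in> downmap At pr kd (upmap pr ku {\<beta> i})"
  proof (intro downmap_mem[where D = "\<lambda>k k'. (k', k) \<in> Ed \<and> k \<noteq> k'"])
    show "\<And>k k'. (k', k) \<in> Ed \<and> k \<noteq> k' \<Longrightarrow> \<beta> k' \<in> At k' \<and> \<beta> k \<in> pr k' k {\<beta> k'}"
      using Dh by blast
    show "kd \<noteq> []" by fact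
    show "\<forall>l. Suc l < length kd \<longrightarrow> (kd ! Suc l, kd ! l) \<in> Ed \<and> kd ! l \<noteq> kd ! Suc l"
      using oc' nl by (auto simp: kd_def)
  qed (use ku kd in auto)
  moreover have "downmap At pr (drop s ks) (upmap pr (take (Suc s) ks) {\<beta> i}) \<subseteq> pr i j {\<beta> i}"
    using pl i j ij sh Rk[OF i] unfolding plenary_def by blast
  ultimately show "R j \<subseteq> pr i j (R i)" using Rk[OF i] Rk[OF j] kd by (auto simp: ku_def kd_def)
qed

theorem proposition6p30:
  fixes m :: nat and At :: "nat \<Rightarrow> 'b set" and cv :: "nat \<Rightarrow> 'b set \<Rightarrow> 'b set"
    and cp :: "nat \<Rightarrow> 'b set \<Rightarrow> 'b set \<Rightarrow> 'b set" and e :: "nat \<Rightarrow> 'b set"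
    and pr pr' :: "nat \<Rightarrow> nat \<Rightarrow> 'b set \<Rightarrow> 'b set"
    and U :: "'u set" and \<phi> :: "(nat \<Rightarrow> 'b set) \<Rightarrow> ('u \<times> 'u) set"
  assumes "seqf m At cv cp e pr U \<phi>"
    and "tree_weakening m At cv cp e pr pr'"
    and "\<forall>E N. scenario m At cv E N \<and> alg_closed m cp pr E N \<longrightarrow> satisfiable U \<phi> E N"
  shows "\<forall>E N. scenario m At cv E N \<and> alg_closed m cp pr' E N \<longrightarrow> satisfiable U \<phi> E N"
proof (intro allI impI)
  fix E N assume a: "scenario m At cv E N \<and> alg_closed m cp pr' E N"
  obtain Ed where pl: "plenary m At pr Ed"
    and eqE: "\<forall>i j. (i, j) \<in> Ed \<and> i \<noteq> j \<longrightarrow> (\<forall>b\<in>At i. pr i j {b} = pr' i j {b})"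
    using assms(2) unfolding tree_weakening_def by blast
  have ma: "multialg m At cv cp e pr" using assms(2) unfolding tree_weakening_def weakening_def by blast
  have "\<forall>x\<in>E. \<forall>y\<in>E. x \<noteq> y \<longrightarrow> closed_proj m pr (N x y)"
  proof (intro ballI impI)
    fix x y assume "x \<in> E" "y \<in> E" "x \<noteq> y"
    then have "mbasic m At (N x y)" "closed_proj m pr' (N x y)"
      using a unfolding scenario_def alg_closed_def by blast+
    then show "closed_proj m pr (N x y)" using closed_transfer[OF ma pl eqE] by blast
  qed
  then have "alg_closed m cp pr E N" using a unfolding alg_closed_def by blast
  then show "satisfiable U \<phi> E N" using assms(3) a by blast
qed

end
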